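(* Let $b\ge3$ be an integer and $D \subset \{0,\ldots,b-1\}$ with $2\le\#D\le b-1$; let $C(b,D)$ be the corresponding generalized Cantor set with Hausdorff dimension $\gamma=\log\#D/\log b$, and let $m = \min\{ \min D, b-1-\max D \}$. Let $A=(a_{n})_{n \geq 1}$ be an unbounded non-decreasing sequence of positive integers, let $f$ be a dimension function such that $r\mapsto r^{-\gamma} f(r)$ is monotonic, and let $\psi : \mathbb{N} \to (0,\infty)$. If $$\sum_{i \in I \colon \psi_{A}(i) > \frac{m}{(b-1) b^{ i }}} f\left(\psi_{A}(i) - \frac{m}{(b-1) b^{i}}\right) b^{i \gamma } < \infty,$$ then $\mathcal{H}^{f} (W_{b,A}(\psi) \cap C(b,D))= 0$.
   Context: $C(b,D)$ is the set of $x \in [0,1]$ whose base-$b$ expansion uses only digits from $D$. A dimension function is a continuous, non-decreasing $f:(0,\infty)\to(0,\infty)$ with $\lim_{r\to0}f(r)=0$; $\mathcal{H}^f$ is the Hausdorff $f$-measure. $W_{b,A}(\psi) = \{x \in [0,1] : |x - p/b^{a_n}| < \psi(n) \text{ for infinitely many } (p,n) \in \mathbb{N}^2\}$; $I = \{i\in\mathbb{N} : a_n = i \text{ for some } n\}$; for $i\in I$, $\psi_A(i) = \max\{\psi(n) : a_n = i\}$. *)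

theory Defs
  imports "HOL-Analysis.Analysis"
begin

definition cantor_set :: "nat \<Rightarrow> nat set \<Rightarrow> real set" where
  "cantor_set b D = {x \<in> {0..1}. \<exists>d :: nat \<Rightarrow> nat. (\<forall>k. d k \<in> D) \<and>
       (\<lambda>k. real (d k) / real b ^ Suc k) sums x}"

definition dimension_function :: "(real \<Rightarrow> real) \<Rightarrow> bool" where
  "dimension_function f \<longleftrightarrow> continuous_on {0<..} f \<and> mono_on {0<..} f \<and>
     (\<forall>r>0. f r > 0) \<and> (f \<longlongrightarrow> 0) (at_right 0)"

text \<open>Gauge of a set in a cover: f(diam U), with the usual convention that sets of
  diameter 0 (empty set, singletons) contribute f(0) = lim_{r->0} f(r) = 0.\<close>
definition hgauge :: "(real \<Rightarrow> real) \<Rightarrow> real set \<Rightarrow> ennreal" where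
  "hgauge f U = (if diameter U > 0 then ennreal (f (diameter U)) else 0)"

definition hausdorff_content :: "(real \<Rightarrow> real) \<Rightarrow> real \<Rightarrow> real set \<Rightarrow> ennreal" where
  "hausdorff_content f \<delta> E = (INF U \<in> {U :: nat \<Rightarrow> real set.
       E \<subseteq> (\<Union>i. U i) \<and> (\<forall>i. bounded (U i) \<and> diameter (U i) \<le> \<delta>)}.
       (\<Sum>i. hgauge f (U i)))"

definition hausdorff_measure :: "(real \<Rightarrow> real) \<Rightarrow> real set \<Rightarrow> ennreal" where
  "hausdorff_measure f E = (SUP \<delta> \<in> {0<..}. hausdorff_content f \<delta> E)"

definition W_set :: "nat \<Rightarrow> (nat \<Rightarrow> nat) \<Rightarrow> (nat \<Rightarrow> real) \<Rightarrow> real set" where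
  "W_set b a \<psi> = {x \<in> {0..1}. infinite {(p :: nat, n :: nat). p \<ge> 1 \<and> n \<ge> 1 \<and>
       \<bar>x - real p / real b ^ a n\<bar> < \<psi> n}}"

definition index_set :: "(nat \<Rightarrow> nat) \<Rightarrow> nat set" where
  "index_set a = {i. \<exists>n\<ge>1. a n = i}"

definition psi_A :: "(nat \<Rightarrow> nat) \<Rightarrow> (nat \<Rightarrow> real) \<Rightarrow> nat \<Rightarrow> real" where
  "psi_A a \<psi> i = Max {\<psi> n | n. n \<ge> 1 \<and> a n = i}"

end

theory Submission imports Defs "HOL-Library.Nat_Bijection" begin


fun pre :: "nat \<Rightarrow> (nat \<Rightarrow> nat) \<Rightarrow> nat \<Rightarrow> nat" where
  "pre b d 0 = 0"
| "pre b d (Suc i) = b * pre b d i + d i"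

lemma pre_sum:
  assumes "b > 0"
  shows "(\<Sum>k<i. real (d k) / real b ^ Suc k) = real (pre b d i) / real b ^ i"
proof (induction i)
  case 0 then show ?case by simp
next
  case (Suc i)
  then show ?case using assms by (simp add: field_simps)
qed

lemma geo_c:
  assumes "b \<ge> 2"
  shows "(\<lambda>k. c / real b ^ Suc k) sums (c / (real b - 1))"
proof -
  have h: "norm (1 / real b) < 1" using assms by simp
  have "(\<lambda>k. (1 / real b) ^ k) sums (1 / (1 - 1 / real b))"
    using geometric_sums[OF h] .
  then have "(\<lambda>k. (c / real b) * (1 / real b) ^ k) sums ((c / real b) * (1 / (1 - 1 / real b)))"
    by (rule sums_mult)
  moreover have "(c / real b) * (1 / (1 - 1 / real b)) = c / (real b - 1)"
    using assms by (simp add: field_simps)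
  moreover have "(\<lambda>k. (c / real b) * (1 / real b) ^ k) = (\<lambda>k. c / real b ^ Suc k)"
    by (rule ext) (simp add: field_simps power_divide)
  ultimately show ?thesis by metis
qed

lemma digits_tail:
  assumes b: "b \<ge> 2" and d: "\<forall>k. d k \<in> D" and fin: "finite D"
    and s: "(\<lambda>k. real (d k) / real b ^ Suc k) sums x"
  shows "\<exists>t. x * real b ^ i = real (pre b d i) + t \<and> real (Min D) / (real b - 1) \<le> t
            \<and> t \<le> real (Max D) / (real b - 1)"
proof -
  let ?f = "\<lambda>k. real (d k) / real b ^ Suc k"
  define t where "t = (x - real (pre b d i) / real b ^ i) * real b ^ i"
  have "(\<lambda>k. ?f (k + i)) sums (x - (\<Sum>k<i. ?f k))"
    using sums_iff_shift[of ?f i "x - (\<Sum>k<i. ?f k)"] s by simp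
  then have s1: "(\<lambda>k. ?f (k + i)) sums (x - real (pre b d i) / real b ^ i)"
    using pre_sum[of b d i] b by simp
  have "(\<lambda>k. ?f (k + i) * real b ^ i) sums t"
    unfolding t_def by (rule sums_mult2[OF s1])
  moreover have "\<And>k. ?f (k + i) * real b ^ i = real (d (k + i)) / real b ^ Suc k"
    using b by (simp add: power_add field_simps)
  ultimately have st: "(\<lambda>k. real (d (k + i)) / real b ^ Suc k) sums t" by simp
  have "real (Min D) / (real b - 1) \<le> t"
  proof (rule sums_le[OF _ geo_c[OF b] st])
    fix k show "real (Min D) / real b ^ Suc k \<le> real (d (k + i)) / real b ^ Suc k"
      using d fin b by (intro divide_right_mono) auto
  qed
  moreover have "t \<le> real (Max D) / (real b - 1)"
  proof (rule sums_le[OF _ st geo_c[OF b]])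
    fix k show "real (d (k + i)) / real b ^ Suc k \<le> real (Max D) / real b ^ Suc k"
      using d fin b by (intro divide_right_mono) auto
  qed
  moreover have "x * real b ^ i = real (pre b d i) + t"
    unfolding t_def using b by (simp add: field_simps)
  ultimately show ?thesis by blast
qed

lemma dist_grid:
  assumes b: "b \<ge> 2" and d: "\<forall>k. d k \<in> D" and fin: "finite D" and D: "D \<subseteq> {0..b-1}"
    and ne: "D \<noteq> {}"
    and s: "(\<lambda>k. real (d k) / real b ^ Suc k) sums x"
  shows "\<bar>x * real b ^ i - real_of_int p\<bar> \<ge> real (min (Min D) (b - 1 - Max D)) / (real b - 1)"
proof -
  obtain t where t: "x * real b ^ i = real (pre b d i) + t" "real (Min D) / (real b - 1) \<le> t"
     "t \<le> real (Max D) / (real b - 1)" using digits_tail[OF b d fin s] by blast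
  have mx: "Max D \<le> b - 1" using D fin ne by auto
  have b1: "real b - 1 > 0" using b by simp
  let ?m = "real (min (Min D) (b - 1 - Max D))"
  have m1: "?m \<le> real (Min D)" by simp
  have m2: "?m \<le> real b - 1 - real (Max D)" using mx b by (simp add: of_nat_diff)
  show ?thesis
  proof (cases "p \<le> int (pre b d i)")
    case True
    then have "real_of_int p \<le> real (pre b d i)" by linarith
    moreover have "?m / (real b - 1) \<le> t" using t(2) m1 b1
      by (meson divide_right_mono less_imp_le order_trans)
    ultimately show ?thesis using t(1) by linarith
  next
    case False
    then have "real_of_int p \<ge> real (pre b d i) + 1" by linarith
    moreover have "?m / (real b - 1) \<le> 1 - t"
    proof -
      have "1 - t \<ge> 1 - real (Max D) / (real b - 1)" using t(3) by simp
      also have "1 - real (Max D) / (real b - 1) = (real b - 1 - real (Max D)) / (real b - 1)"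
        using b1 by (simp add: field_simps)
      finally show ?thesis using m2 b1
        by (meson divide_right_mono less_imp_le order_trans)
    qed
    ultimately show ?thesis using t(1) by linarith
  qed
qed

definition Qs :: "nat \<Rightarrow> nat set \<Rightarrow> nat \<Rightarrow> nat set" where
  "Qs b D i = {pre b d i | d. \<forall>k. d k \<in> D}"

lemma Qs_card: assumes "finite D" shows "finite (Qs b D i) \<and> card (Qs b D i) \<le> card D ^ i"
proof (induction i)
  case 0
  have "Qs b D 0 \<subseteq> {0}" unfolding Qs_def by auto
  then have "finite (Qs b D 0)" using finite_subset by blast
  moreover have "card (Qs b D 0) \<le> card {0::nat}" by (rule card_mono) (use \<open>Qs b D 0 \<subseteq> {0}\<close> in auto)
  ultimately show ?case by simp
next
  case (Suc i)
  have sub: "Qs b D (Suc i) \<subseteq> (\<lambda>(q, e). b * q + e) ` (Qs b D i \<times> D)"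
    unfolding Qs_def by force
  have fin: "finite (Qs b D i \<times> D)" using Suc assms by simp
  have "card (Qs b D (Suc i)) \<le> card ((\<lambda>(q, e). b * q + e) ` (Qs b D i \<times> D))"
    using sub fin by (intro card_mono) auto
  also have "\<dots> \<le> card (Qs b D i \<times> D)" using card_image_le fin by blast
  also have "\<dots> = card (Qs b D i) * card D" by (simp add: card_cartesian_product)
  also have "\<dots> \<le> card D ^ Suc i" using Suc by (simp add: mult.commute)
  finally show ?case using sub fin finite_subset by blast
qed

lemma mono_from:
  assumes "\<forall>n\<ge>1. (a::nat\<Rightarrow>nat) n \<le> a (Suc n)" "1 \<le> n0" "n0 \<le> n"
  shows "a n0 \<le> a n"
  using assms(3)
proof (induction n rule: dec_induct)
  case base then show ?case by simp
next
  case (step n) then show ?case using assms(1,2) by (meson le_trans order_trans)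
qed



theorem lemma4p2:
  fixes b :: nat and D :: "nat set" and a :: "nat \<Rightarrow> nat"
    and f :: "real \<Rightarrow> real" and \<psi> :: "nat \<Rightarrow> real"
  assumes b: "b \<ge> 3"
    and D: "D \<subseteq> {0..b-1}" "2 \<le> card D" "card D \<le> b - 1"
    and a_pos: "\<forall>n\<ge>1. a n > 0"
    and a_mono: "\<forall>n\<ge>1. a n \<le> a (Suc n)"
    and a_unbdd: "\<forall>M. \<exists>n\<ge>1. a n > M"
    and f: "dimension_function f"
    and f_mono: "mono_on {0<..} (\<lambda>r. r powr (- log b (card D)) * f r) \<or>
                 antimono_on {0<..} (\<lambda>r. r powr (- log b (card D)) * f r)"
    and \<psi>: "\<forall>n\<ge>1. \<psi> n > 0"
    and sum: "(\<lambda>i. f (psi_A a \<psi> i - real (min (Min D) (b - 1 - Max D)) / ((real b - 1) * real b ^ i))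
                  * real b powr (real i * log b (card D)))
              summable_on {i \<in> index_set a.
                 psi_A a \<psi> i > real (min (Min D) (b - 1 - Max D)) / ((real b - 1) * real b ^ i)}"
  shows "hausdorff_measure f (W_set b a \<psi> \<inter> cantor_set b D) = 0"
proof -
  have b2: "b \<ge> 2" using b by simp
  have b1: "real b > 1" using b by simp
  have finD: "finite D" using D(2) card.infinite by fastforce
  have Dne: "D \<noteq> {}" using D(2) by auto
  have cardD: "card D > 0" using D(2) by simp
  define m where "m = min (Min D) (b - 1 - Max D)"
  define dl where "dl i = real m / ((real b - 1) * real b ^ i)" for i :: nat
  define P where "P i = psi_A a \<psi> i" for i
  define S where "S = {i \<in> index_set a. P i > dl i}"
  define r where "r i = P i - dl i" for i
  define c where "c i = f (r i) * real (card D) ^ i" for i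
  define C where "C = cantor_set b D"
  have fmono: "mono_on {0<..} f" and fpos: "\<And>x. x > 0 \<Longrightarrow> f x > 0"
    using f unfolding dimension_function_def by auto
  have powr_eq: "real b powr (real i * log b (card D)) = real (card D) ^ i" for i
  proof -
    have "real b powr (real i * log b (card D)) = (real b powr log b (card D)) powr real i"
      by (simp add: powr_powr mult.commute)
    also have "\<dots> = real (card D) powr real i" using b1 cardD by simp
    also have "\<dots> = real (card D) ^ i" using cardD by (simp add: powr_realpow)
    finally show ?thesis .
  qed
  have csum: "c summable_on S"
    using sum unfolding c_def S_def r_def P_def dl_def m_def powr_eq by simp
  have cpos: "c i > 0" if "i \<in> S" for i
    using that fpos cardD unfolding c_def S_def r_def by simp
  define g where "g i = (if i \<in> S then c i else 0)" for i
  have gnn: "g i \<ge> 0" for i using cpos unfolding g_def by (simp add: less_imp_le)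
  have gsum: "summable g"
  proof -
    have "g summable_on UNIV"
      using csum summable_on_cong_neutral[of S UNIV c g] by (auto simp: g_def)
    then show ?thesis using summable_on_UNIV_nonneg_real_iff gnn by blast
  qed
  have fin_le: "finite {n. a n \<le> M}" for M
  proof -
    obtain n0 where n0: "n0 \<ge> 1" "a n0 > M" using a_unbdd by blast
    have "{n. a n \<le> M} \<subseteq> {..<n0}"
    proof
      fix n assume "n \<in> {n. a n \<le> M}"
      then have "a n \<le> M" by simp
      show "n \<in> {..<n0}"
      proof (rule ccontr)
        assume "n \<notin> {..<n0}"
        then have "a n0 \<le> a n" using mono_from[OF a_mono n0(1)] by simp
        then show False using n0 \<open>a n \<le> M\<close> by simp
      qed
    qed
    then show ?thesis using finite_subset by blast
  qed
  have psi_ge: "\<psi> n \<le> P (a n)" if "n \<ge> 1" for n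
  proof -
    have "finite {n'. n' \<ge> 1 \<and> a n' = a n}"
      using fin_le[of "a n"] by (rule finite_subset[rotated]) auto
    then have "finite {\<psi> n' | n'. n' \<ge> 1 \<and> a n' = a n}"
      by (simp add: setcompr_eq_image)
    then show ?thesis unfolding P_def psi_A_def using that by (intro Max_ge) auto
  qed
  have idx: "a n \<in> index_set a" if "n \<ge> 1" for n
    using that unfolding index_set_def by auto
  have distC: "dl i \<le> \<bar>x - real p / real b ^ i\<bar>" if xC0: "x \<in> C" for x p i
  proof -
    obtain d where d: "\<forall>k. d k \<in> D" "(\<lambda>k. real (d k) / real b ^ Suc k) sums x"
      using xC0 unfolding C_def cantor_set_def by blast
    have "real m / (real b - 1) \<le> \<bar>x * real b ^ i - real_of_int (int p)\<bar>"
      using dist_grid[OF b2 d(1) finD D(1) Dne d(2)] unfolding m_def by blast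
    also have "\<bar>x * real b ^ i - real_of_int (int p)\<bar> = \<bar>x - real p / real b ^ i\<bar> * real b ^ i"
    proof -
      have "x * real b ^ i - real_of_int (int p) = (x - real p / real b ^ i) * real b ^ i"
        using b1 by (simp add: field_simps)
      then show ?thesis by (simp add: abs_mult)
    qed
    finally have h: "real m / (real b - 1) \<le> \<bar>x - real p / real b ^ i\<bar> * real b ^ i" .
    have "dl i = (real m / (real b - 1)) / real b ^ i" unfolding dl_def by (simp add: divide_divide_eq_left mult.commute)
    also have "\<dots> \<le> \<bar>x - real p / real b ^ i\<bar>" using h b1 by (simp add: pos_divide_le_eq mult_ac)
    finally show ?thesis .
  qed
  have cover: "\<exists>i\<in>S. i \<ge> N \<and> (\<exists>p::nat. \<bar>x - real p / real b ^ i\<bar> < P i)"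
    if x: "x \<in> W_set b a \<psi> \<inter> C" for x N
  proof (rule ccontr)
    assume nc: "\<not> ?thesis"
    define Ps where "Ps = {(p :: nat, n :: nat). p \<ge> 1 \<and> n \<ge> 1 \<and>
       \<bar>x - real p / real b ^ a n\<bar> < \<psi> n}"
    have inf: "infinite Ps" using x unfolding Ps_def W_set_def by simp
    define Bd where "Bd n = nat \<lceil>(x + \<psi> n) * real b ^ a n\<rceil>" for n
    have "Ps \<subseteq> (\<Union>n\<in>{n. a n \<le> N}. {..Bd n} \<times> {n})"
    proof
      fix y assume "y \<in> Ps"
      then obtain p n where y: "y = (p, n)" "p \<ge> 1" "n \<ge> 1"
        "\<bar>x - real p / real b ^ a n\<bar> < \<psi> n" unfolding Ps_def by auto
      have lt: "\<bar>x - real p / real b ^ a n\<bar> < P (a n)" using y psi_ge by force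
      have xC: "x \<in> C" using x by simp
      have "a n \<in> S" using idx[OF y(3)] distC[OF xC, of "a n" p] lt unfolding S_def by simp
      then have "a n < N" using nc lt by force
      have "real p / real b ^ a n < x + \<psi> n" using y(4) by linarith
      then have "real p < (x + \<psi> n) * real b ^ a n" using b1 by (simp add: field_simps)
      then have "p \<le> Bd n" unfolding Bd_def by linarith
      then show "y \<in> (\<Union>n\<in>{n. a n \<le> N}. {..Bd n} \<times> {n})"
        using y \<open>a n < N\<close> by auto
    qed
    moreover have "finite (\<Union>n\<in>{n. a n \<le> N}. {..Bd n} \<times> {n})"
      using fin_le by blast
    ultimately show False using inf finite_subset by blast
  qed
  have rpos: "r i > 0" if "i \<in> S" for i using that unfolding S_def r_def by simp
  have dl_le: "dl i \<le> 1 / real b ^ i" for i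
  proof -
    have "real m \<le> real b - 1" unfolding m_def using b by linarith
    then have h1: "real m / (real b - 1) \<le> 1" using b1 by simp
    have eq: "dl i = (real m / (real b - 1)) / real b ^ i" unfolding dl_def by (simp add: divide_divide_eq_left mult.commute)
    show ?thesis by (subst eq) (rule divide_right_mono[OF h1], simp)
  qed
  have content0: "hausdorff_content f del (W_set b a \<psi> \<inter> C) = 0" if del: "del > 0" for del
  proof -
    have le_eps: "hausdorff_content f del (W_set b a \<psi> \<inter> C) \<le> 0 + ennreal e" if e: "e > 0" for e
    proof -
      obtain N1 where N1: "\<forall>n\<ge>N1. norm (\<Sum>i. g (i + n)) < e / 12"
        using suminf_exist_split[OF _ gsum, of "e/12"] e by auto
      have fdel: "f del > 0" using fpos del by simp
      obtain N2 where N2: "\<forall>n\<ge>N2. norm (g n - 0) < f del"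
        using LIMSEQ_D[OF summable_LIMSEQ_zero[OF gsum] fdel] by blast
      have rsmall: "r i \<le> del" if "i \<in> S" "i \<ge> N2" for i
      proof (rule ccontr)
        assume "\<not> r i \<le> del"
        then have "f del \<le> f (r i)" using fmono del by (intro mono_onD[OF fmono]) auto
        moreover have "f (r i) \<le> c i"
        proof -
          have "1 \<le> real (card D) ^ i" using cardD by simp
          then have "f (r i) * 1 \<le> f (r i) * real (card D) ^ i"
            using fpos[OF rpos[OF that(1)]] by (intro mult_left_mono) auto
          then show ?thesis unfolding c_def by simp
        qed
        moreover have "c i < f del" using N2 that unfolding g_def by auto
        ultimately show False by simp
      qed
      define N where "N = max N1 N2"
      define Q where "Q i = Qs b D i" for i
      define Wi where "Wi i q j = (if r i > 1 / real b ^ i then {real q / real b ^ i .. (real q + 1) / real b ^ i}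
         else (if even j then {(real q + real (j div 2) - 2) / real b ^ i + dl i .. (real q + real (j div 2) - 2) / real b ^ i + P i}
               else {(real q + real (j div 2) - 2) / real b ^ i - P i .. (real q + real (j div 2) - 2) / real b ^ i - dl i}))"
        for i q j
      define cond where "cond i q j \<longleftrightarrow> i \<in> S \<and> N \<le> i \<and> q \<in> Q i \<and> j < (12::nat)" for i q j
      define V where "V i q j = (if cond i q j then Wi i q j else {})" for i q j
      define dec where "dec n = (fst (prod_decode n), prod_decode (snd (prod_decode n)))" for n
      define V' where "V' y = V (fst y) (fst (snd y)) (snd (snd y))" for y
      define U where "U n = V' (dec n)" for n
      define hr where "hr X = (if diameter X > 0 then f (diameter X) else 0)" for X :: "real set"
      define w where "w y = (if cond (fst y) (fst (snd y)) (snd (snd y)) then f (r (fst y)) else 0)" for y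
      have hr_nn: "hr X \<ge> 0" for X unfolding hr_def using fpos by (simp add: less_imp_le)
      have hg: "hgauge f X = ennreal (hr X)" for X unfolding hgauge_def hr_def by simp
      have Wi_int: "\<exists>lo hi. Wi i q j = {lo..hi} \<and> lo \<le> hi \<and> hi - lo \<le> r i" if "i \<in> S" for i q j
      proof (cases "r i > 1 / real b ^ i")
        case True
        have "Wi i q j = {real q / real b ^ i .. (real q + 1) / real b ^ i}"
          using True unfolding Wi_def by simp
        moreover have "(real q + 1) / real b ^ i - real q / real b ^ i = 1 / real b ^ i"
          using b1 by (simp add: field_simps)
        moreover have "real q / real b ^ i \<le> (real q + 1) / real b ^ i"
          using b1 by (simp add: divide_right_mono)
        ultimately show ?thesis using True by (intro exI[of _ "real q / real b ^ i"] exI[of _ "(real q + 1) / real b ^ i"]) simp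
      next
        case False
        define z where "z = (real q + real (j div 2) - 2) / real b ^ i"
        have rp: "r i > 0" using rpos[OF that] .
        show ?thesis
        proof (cases "even j")
          case True
          then have "Wi i q j = {z + dl i .. z + P i}" using False unfolding Wi_def z_def by simp
          then show ?thesis using rp unfolding r_def by (intro exI[of _ "z + dl i"] exI[of _ "z + P i"]) simp
        next
          case odd: False
          then have "Wi i q j = {z - P i .. z - dl i}" using False unfolding Wi_def z_def by simp
          then show ?thesis using rp unfolding r_def by (intro exI[of _ "z - P i"] exI[of _ "z - dl i"]) simp
        qed
      qed
      have Vprops: "bounded (V' y) \<and> diameter (V' y) \<le> del \<and> hr (V' y) \<le> w y" for y
      proof (cases "cond (fst y) (fst (snd y)) (snd (snd y))")
        case False
        then show ?thesis unfolding V'_def V_def w_def hr_def using del by simp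
      next
        case True
        let ?i = "fst y"
        have iS: "?i \<in> S" "N2 \<le> ?i" using True unfolding cond_def N_def by auto
        obtain lo hi where lh: "V' y = {lo..hi}" "lo \<le> hi" "hi - lo \<le> r ?i"
        proof -
          have "V' y = Wi ?i (fst (snd y)) (snd (snd y))" using True unfolding V'_def V_def by simp
          then show ?thesis using Wi_int[OF iS(1), of "fst (snd y)" "snd (snd y)"] that by metis
        qed
        have "diameter (V' y) \<le> r ?i" using lh by simp
        moreover have "hr (V' y) \<le> f (r ?i)"
        proof (cases "diameter (V' y) > 0")
          case True
          then show ?thesis unfolding hr_def using \<open>diameter (V' y) \<le> r ?i\<close>
            by (simp add: mono_onD[OF fmono])
        next
          case False
          then show ?thesis unfolding hr_def using fpos[OF rpos[OF iS(1)]] by simp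
        qed
        ultimately show ?thesis using lh rsmall[OF iS] True unfolding w_def by auto
      qed
      have bpos: "real b ^ i > 0" for i using b1 by simp
      have coverU: "W_set b a \<psi> \<inter> C \<subseteq> (\<Union>n. U n)"
      proof
        fix x assume x: "x \<in> W_set b a \<psi> \<inter> C"
        obtain i p where ip: "i \<in> S" "i \<ge> N" "\<bar>x - real p / real b ^ i\<bar> < P i"
          using cover[OF x, of N] by blast
        have xC: "x \<in> C" using x by simp
        obtain d where d: "\<forall>k. d k \<in> D" "(\<lambda>k. real (d k) / real b ^ Suc k) sums x"
          using xC unfolding C_def cantor_set_def by blast
        define q where "q = pre b d i"
        have qQ: "q \<in> Q i" unfolding Q_def Qs_def q_def using d(1) by blast
        obtain t where t: "x * real b ^ i = real q + t" "real (Min D) / (real b - 1) \<le> t"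
            "t \<le> real (Max D) / (real b - 1)"
          using digits_tail[OF b2 d(1) finD d(2), of i] unfolding q_def by blast
        have mx: "Max D \<le> b - 1" using D(1) finD Dne by auto
        have t0: "0 \<le> t" using t(2) b1 by (meson divide_nonneg_nonneg of_nat_0_le_iff order_trans diff_ge_0_iff_ge less_imp_le of_nat_1)
        have "real (Max D) \<le> real b - 1" using mx b by linarith
        then have "real (Max D) / (real b - 1) \<le> 1" using b1 by simp
        then have t1: "t \<le> 1" using t(3) by linarith
        have dli: "dl i \<le> \<bar>x - real p / real b ^ i\<bar>" by (rule distC[OF xC])
        have xe: "x = (real q + t) / real b ^ i" using t(1) bpos[of i] by (simp add: field_simps)
        have "\<exists>j. j < 12 \<and> x \<in> Wi i q j"
        proof (cases "r i > 1 / real b ^ i")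
          case True
          have "real q / real b ^ i \<le> x" unfolding xe using t0 bpos[of i] by (intro divide_right_mono) auto
          moreover have "x \<le> (real q + 1) / real b ^ i" unfolding xe using t1 bpos[of i] by (intro divide_right_mono) auto
          ultimately show ?thesis using True unfolding Wi_def by (intro exI[of _ 0]) auto
        next
          case False
          have Pi: "P i \<le> 2 / real b ^ i" using False dl_le[of i] unfolding r_def by simp
          have "\<bar>x * real b ^ i - real p\<bar> = \<bar>x - real p / real b ^ i\<bar> * real b ^ i"
          proof -
            have "x * real b ^ i - real p = (x - real p / real b ^ i) * real b ^ i"
              using bpos[of i] by (simp add: field_simps)
            then show ?thesis using bpos[of i] by (simp add: abs_mult)
          qed
          also have "\<dots> < P i * real b ^ i" using ip(3) bpos[of i] by simp
          also have "\<dots> \<le> 2" using Pi bpos[of i] by (simp add: pos_le_divide_eq)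
          finally have lt2: "\<bar>x * real b ^ i - real p\<bar> < 2" .
          have "real p < real q + 3" "real q < real p + 2" using lt2 t(1) t0 t1 by linarith+
          then have pq: "p < q + 3" "q < p + 2" by linarith+
          define k where "k = p + 2 - q"
          have k: "k < 5" "real p = real q + real k - 2" using pq unfolding k_def by auto
          define j where "j = 2 * k + (if real p / real b ^ i \<le> x then 0 else 1)"
          have j: "j < 12" "j div 2 = k" unfolding j_def using k by auto
          have z: "(real q + real (j div 2) - 2) / real b ^ i = real p / real b ^ i" using j k by simp
          show ?thesis
          proof (cases "real p / real b ^ i \<le> x")
            case True
            then have "even j" unfolding j_def by simp
            have "x \<in> {real p / real b ^ i + dl i .. real p / real b ^ i + P i}"
              using True dli ip(3) by auto
            then have "x \<in> Wi i q j" unfolding Wi_def z using \<open>even j\<close> False by simp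
            then show ?thesis using j by blast
          next
            case nt: False
            then have "odd j" unfolding j_def by simp
            have "x \<in> {real p / real b ^ i - P i .. real p / real b ^ i - dl i}"
              using nt dli ip(3) by auto
            then have "x \<in> Wi i q j" unfolding Wi_def z using \<open>odd j\<close> False by simp
            then show ?thesis using j by blast
          qed
        qed
        then obtain j where j: "j < 12" "x \<in> Wi i q j" by blast
        have "U (prod_encode (i, prod_encode (q, j))) = Wi i q j"
          unfolding U_def dec_def V'_def V_def cond_def using ip qQ j by simp
        then show "x \<in> (\<Union>n. U n)" using j by blast
      qed
      define g' where "g' i = (if N \<le> i then g i else 0)" for i
      have gshift: "summable (\<lambda>k. g (k + N))" using gsum by (simp add: summable_iff_shift)
      have g'sums: "g' sums (\<Sum>k. g (k + N))"
      proof -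
        have "(\<lambda>k. g' (k + N)) sums (\<Sum>k. g (k + N))"
          unfolding g'_def using summable_sums[OF gshift] by simp
        moreover have "(\<Sum>i<N. g' i) = 0" unfolding g'_def by simp
        ultimately show ?thesis using sums_iff_shift[of g' N] by simp
      qed
      have g'nn: "g' i \<ge> 0" for i unfolding g'_def using gnn by simp
      define undec where "undec y = prod_encode (fst y, prod_encode (snd y))" for y :: "nat \<times> nat \<times> nat"
      have undec: "undec (dec n) = n" for n unfolding undec_def dec_def by simp
      have inj: "inj dec" by (rule inj_on_inverseI[of _ undec]) (simp add: undec)
      have fstM: "fst (dec n) < M" if "n < M" for n M
      proof -
        have "fst (prod_decode n) \<le> prod_encode (prod_decode n)"
          using le_prod_encode_1[of "fst (prod_decode n)" "snd (prod_decode n)"] by simp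
        then show ?thesis using that unfolding dec_def by simp
      qed
      have finQ: "finite (Q i)" "card (Q i) \<le> card D ^ i" for i
        unfolding Q_def using Qs_card[OF finD] by auto
      have wnn: "w y \<ge> 0" for y unfolding w_def using fpos rpos cond_def by (simp add: less_imp_le)
      have part: "(\<Sum>n<M. hr (U n)) \<le> 12 * (\<Sum>k. g (k + N))" for M
      proof -
        define T where "T = dec ` {..<M}"
        define Sup where "Sup = Sigma {..<M} (\<lambda>i. Q i \<times> {..<12::nat})"
        have finSup: "finite Sup" unfolding Sup_def using finQ by auto
        have "(\<Sum>n<M. hr (U n)) \<le> (\<Sum>n<M. w (dec n))"
          using Vprops unfolding U_def by (intro sum_mono) auto
        also have "\<dots> = sum w T" unfolding T_def
          by (simp add: sum.reindex[OF inj_on_subset[OF inj]])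
        also have "\<dots> = sum w (T \<inter> Sup)"
        proof (rule sum.mono_neutral_right)
          show "finite T" unfolding T_def by simp
          show "T \<inter> Sup \<subseteq> T" by simp
          show "\<forall>y\<in>T - T \<inter> Sup. w y = 0"
          proof
            fix y assume y: "y \<in> T - T \<inter> Sup"
            then have "fst y < M" unfolding T_def using fstM by auto
            then have "\<not> cond (fst y) (fst (snd y)) (snd (snd y))"
              using y unfolding Sup_def cond_def by (cases y) auto
            then show "w y = 0" unfolding w_def by simp
          qed
        qed
        also have "\<dots> \<le> sum w Sup" using finSup wnn by (intro sum_mono2) auto
        also have "sum w Sup = (\<Sum>i<M. \<Sum>y\<in>Q i \<times> {..<12}. w (i, y))"
          unfolding Sup_def using finQ by (subst sum.Sigma) auto
        also have "\<dots> \<le> (\<Sum>i<M. 12 * g' i)"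
        proof (rule sum_mono)
          fix i assume "i \<in> {..<M}"
          show "(\<Sum>y\<in>Q i \<times> {..<12}. w (i, y)) \<le> 12 * g' i"
          proof (cases "i \<in> S \<and> N \<le> i")
            case True
            have "(\<Sum>y\<in>Q i \<times> {..<12}. w (i, y)) = (\<Sum>y\<in>Q i \<times> {..<12::nat}. f (r i))"
              using True by (intro sum.cong) (auto simp: w_def cond_def)
            also have "\<dots> = real (card (Q i)) * 12 * f (r i)" by (simp add: card_cartesian_product)
            also have "\<dots> \<le> real (card D ^ i) * 12 * f (r i)"
              using finQ(2)[of i] fpos[OF rpos, of i] True
              by (intro mult_right_mono) auto
            also have "\<dots> = 12 * g' i" using True unfolding g'_def g_def c_def by simp
            finally show ?thesis .
          next
            case False
            then have "(\<Sum>y\<in>Q i \<times> {..<12}. w (i, y)) = 0"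
              by (intro sum.neutral) (auto simp: w_def cond_def)
            then show ?thesis using g'nn[of i] by simp
          qed
        qed
        also have "\<dots> = 12 * (\<Sum>i<M. g' i)" by (simp add: sum_distrib_left)
        also have "\<dots> \<le> 12 * (\<Sum>k. g (k + N))"
          using sum_le_suminf[OF sums_summable[OF g'sums], of "{..<M}"] g'nn sums_unique[OF g'sums]
          by simp
        finally show ?thesis .
      qed
      have hr_sum: "summable (\<lambda>n. hr (U n))" by (rule summableI_nonneg_bounded[OF hr_nn part])
      have "(\<Sum>n. hr (U n)) \<le> 12 * (\<Sum>k. g (k + N))" by (rule suminf_le_const[OF hr_sum part])
      also have "\<dots> < e"
      proof -
        have "norm (\<Sum>k. g (k + N)) < e / 12" using N1 unfolding N_def by simp
        then show ?thesis by simp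
      qed
      finally have sle: "(\<Sum>n. hr (U n)) \<le> e" by simp
      have "(\<Sum>n. hgauge f (U n)) = ennreal (\<Sum>n. hr (U n))"
        unfolding hg by (rule suminf_ennreal2[OF hr_nn hr_sum])
      also have "\<dots> \<le> ennreal e" using sle by (rule ennreal_leI)
      finally have sg: "(\<Sum>n. hgauge f (U n)) \<le> ennreal e" .
      have "U \<in> {U :: nat \<Rightarrow> real set. W_set b a \<psi> \<inter> C \<subseteq> (\<Union>i. U i) \<and> (\<forall>i. bounded (U i) \<and> diameter (U i) \<le> del)}"
        using coverU Vprops unfolding U_def by auto
      then have "hausdorff_content f del (W_set b a \<psi> \<inter> C) \<le> ennreal e"
        unfolding hausdorff_content_def
        by (rule INF_lower2[where f="\<lambda>U. \<Sum>i. hgauge f (U i)", OF _ sg])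
      then show ?thesis by simp
    qed
    have "hausdorff_content f del (W_set b a \<psi> \<inter> C) \<le> 0"
    proof (rule ennreal_le_epsilon)
      fix e :: real assume "0 < e" then show "hausdorff_content f del (W_set b a \<psi> \<inter> C) \<le> 0 + ennreal e"
        by (rule le_eps)
    qed
    then show ?thesis by (rule order.antisym[OF _ zero_le])
  qed
  have "(SUP del\<in>{0<..}. hausdorff_content f del (W_set b a \<psi> \<inter> C)) = (SUP del\<in>({0<..}::real set). (0::ennreal))"
    by (rule SUP_cong) (auto simp: content0)
  then show ?thesis unfolding hausdorff_measure_def C_def by simp
qed
end
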